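(* Let $\omega$ be a weight function. Then: (a) all Hermite functions $H_\gamma$, $\gamma\in\mathbb N_0^d$, belong to $\mathcal S_{\{\omega\}}(\mathbb R^d)$ if and only if $\omega(t)=O(t^2)$ as $t\to+\infty$; (b) all Hermite functions $H_\gamma$, $\gamma\in\mathbb N_0^d$, belong to $\mathcal S_{(\omega)}(\mathbb R^d)$ if and only if $\omega(t)=o(t^2)$ as $t\to+\infty$.
   Context: A weight function is a continuous increasing function $\omega:[0,+\infty)\to[0,+\infty)$ such that: ($\alpha$) there is $L\ge1$ with $\omega(2t)\le L(\omega(t)+1)$ for all $t\ge0$; ($\beta$) $\omega(t)=O(t^2)$ as $t\to+\infty$; ($\gamma$) $\log t=o(\omega(t))$ as $t\to+\infty$; ($\delta$) $\varphi_\omega(t):=\omega(e^t)$ is convex on $[0,+\infty)$. For $t\in\mathbb R^d$ one sets $\omega(t):=\omega(|t|)$. The Young conjugate is $\varphi_\omega^*(s):=\sup_{t\ge0}\{ts-\varphi_\omega(t)\}$. For $\lambda>0$, $\alpha\in\mathbb N_0^d$, $W^{(\lambda)}_\alpha:=e^{\frac1\lambda\varphi^*_\omega(\lambda|\alpha|)}$ and $\|f\|_{\infty,\mathbf W^{(\lambda)}}:=\sup_{\alpha,\beta\in\mathbb N_0^d}\frac{\|x^\alpha\partial^\beta f\|_\infty}{W^{(\lambda)}_{\alpha+\beta}}$. $\mathcal S_{\{\omega\}}(\mathbb R^d)$ is the set of $f\in C^\infty(\mathbb R^d)$ with $\|f\|_{\infty,\mathbf W^{(\lambda)}}<\infty$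 for some $\lambda>0$; $\mathcal S_{(\omega)}(\mathbb R^d)$ is the set with $\|f\|_{\infty,\mathbf W^{(\lambda)}}<\infty$ for all $\lambda>0$. Hermite functions: $H_\gamma(x)=(2^{|\gamma|}\gamma!\pi^{d/2})^{-1/2}h_\gamma(x)e^{-|x|^2/2}$, with $h_\gamma(x)=(-1)^{|\gamma|}e^{|x|^2}\partial^\gamma e^{-|x|^2}$. *)

theory Defs
  imports "HOL-Analysis.Analysis" "HOL-Library.Landau_Symbols"
begin

definition weight_function :: "(real \<Rightarrow> real) \<Rightarrow> bool" where
  "weight_function \<omega> \<longleftrightarrow>
     continuous_on {0..} \<omega> \<and> mono_on {0..} \<omega> \<and> (\<forall>t\<ge>0. \<omega> t \<ge> 0) \<and>
     (\<exists>L\<ge>1. \<forall>t\<ge>0. \<omega> (2 * t) \<le> L * (\<omega> t + 1)) \<and>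
     \<omega> \<in> O[at_top](\<lambda>t. t\<^sup>2) \<and>
     (\<lambda>t. ln t) \<in> o[at_top](\<omega>) \<and>
     convex_on {0..} (\<lambda>t. \<omega> (exp t))"

definition phi_star :: "(real \<Rightarrow> real) \<Rightarrow> real \<Rightarrow> real" where
  "phi_star \<omega> s = (SUP t\<in>{0..}. t * s - \<omega> (exp t))"

text \<open>Multi-indices in N_0^d are functions 'n => nat; |alpha| is the sum of entries.\<close>
definition mlen :: "('n::finite \<Rightarrow> nat) \<Rightarrow> nat" where
  "mlen \<alpha> = (\<Sum>i\<in>UNIV. \<alpha> i)"

definition Wseq :: "(real \<Rightarrow> real) \<Rightarrow> real \<Rightarrow> ('n::finite \<Rightarrow> nat) \<Rightarrow> real" where
  "Wseq \<omega> lam \<alpha> = exp ((1 / lam) * phi_star \<omega> (lam * real (mlen \<alpha>)))"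

definition partial :: "'n::finite \<Rightarrow> (real^'n \<Rightarrow> real) \<Rightarrow> real^'n \<Rightarrow> real" where
  "partial i f x = deriv (\<lambda>t. f (x + t *\<^sub>R axis i 1)) 0"

definition iter_partial :: "'n::finite list \<Rightarrow> (real^'n \<Rightarrow> real) \<Rightarrow> real^'n \<Rightarrow> real" where
  "iter_partial xs f = foldr partial xs f"

definition smooth_fun :: "(real^'n::finite \<Rightarrow> real) \<Rightarrow> bool" where
  "smooth_fun f \<longleftrightarrow> (\<forall>xs. continuous_on UNIV (iter_partial xs f) \<and>
       (\<forall>i x. (\<lambda>t. iter_partial xs f (x + t *\<^sub>R axis i 1)) differentiable (at 0)))"

text \<open>partial^beta f: differentiate beta i times in direction i (order irrelevant for smooth f).\<close>
definition mpartial :: "('n::finite \<Rightarrow> nat) \<Rightarrow> (real^'n \<Rightarrow> real) \<Rightarrow> real^'n \<Rightarrow> real" where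
  "mpartial \<beta> f = iter_partial (SOME xs. \<forall>i. count_list xs i = \<beta> i) f"

definition mpow :: "real^'n::finite \<Rightarrow> ('n \<Rightarrow> nat) \<Rightarrow> real" where
  "mpow x \<alpha> = (\<Prod>i\<in>UNIV. (x $ i) ^ \<alpha> i)"

definition W_norm_finite :: "(real \<Rightarrow> real) \<Rightarrow> real \<Rightarrow> (real^'n::finite \<Rightarrow> real) \<Rightarrow> bool" where
  "W_norm_finite \<omega> lam f \<longleftrightarrow>
     (\<exists>C. \<forall>\<alpha> \<beta> x. \<bar>mpow x \<alpha> * mpartial \<beta> f x\<bar> \<le> C * Wseq \<omega> lam (\<lambda>i. \<alpha> i + \<beta> i))"

definition S_roumieu :: "(real \<Rightarrow> real) \<Rightarrow> (real^'n::finite \<Rightarrow> real) set" where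
  "S_roumieu \<omega> = {f. smooth_fun f \<and> (\<exists>lam>0. W_norm_finite \<omega> lam f)}"

definition S_beurling :: "(real \<Rightarrow> real) \<Rightarrow> (real^'n::finite \<Rightarrow> real) set" where
  "S_beurling \<omega> = {f. smooth_fun f \<and> (\<forall>lam>0. W_norm_finite \<omega> lam f)}"

definition hermite_poly :: "('n::finite \<Rightarrow> nat) \<Rightarrow> real^'n \<Rightarrow> real" where
  "hermite_poly \<gamma> x = (-1) ^ mlen \<gamma> * exp ((norm x)\<^sup>2) *
       mpartial \<gamma> (\<lambda>y. exp (- (norm y)\<^sup>2)) x"

definition hermite_fun :: "('n::finite \<Rightarrow> nat) \<Rightarrow> real^'n \<Rightarrow> real" where
  "hermite_fun \<gamma> x =
     (2 ^ mlen \<gamma> * (\<Prod>i\<in>UNIV. fact (\<gamma> i)) * pi powr (real CARD('n) / 2)) powr (-1/2)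
     * hermite_poly \<gamma> x * exp (- (norm x)\<^sup>2 / 2)"

end

theory Submission
  imports Defs "HOL-Library.Multiset"
begin


fun pval :: "(real \<times> ('n::finite \<Rightarrow> nat)) list \<Rightarrow> real^'n \<Rightarrow> real" where
  "pval [] x = 0"
| "pval (p # L) x = fst p * mpow x (snd p) + pval L x"

definition pg :: "real \<Rightarrow> (real \<times> ('n::finite \<Rightarrow> nat)) list \<Rightarrow> real^'n \<Rightarrow> real" where
  "pg a L x = pval L x * exp (- a * (norm x)\<^sup>2)"

definition dl1 :: "'n::finite \<Rightarrow> (real \<times> ('n \<Rightarrow> nat)) list \<Rightarrow> (real \<times> ('n \<Rightarrow> nat)) list" where
  "dl1 i L = map (\<lambda>p. (fst p * real (snd p i), (snd p)(i := snd p i - 1))) L"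

definition dl2 :: "real \<Rightarrow> 'n::finite \<Rightarrow> (real \<times> ('n \<Rightarrow> nat)) list \<Rightarrow> (real \<times> ('n \<Rightarrow> nat)) list" where
  "dl2 a i L = map (\<lambda>p. (- 2 * a * fst p, (snd p)(i := snd p i + 1))) L"

definition dl :: "real \<Rightarrow> 'n::finite \<Rightarrow> (real \<times> ('n \<Rightarrow> nat)) list \<Rightarrow> (real \<times> ('n \<Rightarrow> nat)) list" where
  "dl a i L = dl1 i L @ dl2 a i L"

fun dli :: "real \<Rightarrow> 'n::finite list \<Rightarrow> (real \<times> ('n \<Rightarrow> nat)) list \<Rightarrow> (real \<times> ('n \<Rightarrow> nat)) list" where
  "dli a [] L = L"
| "dli a (i # xs) L = dl a i (dli a xs L)"

lemma pval_append: "pval (L1 @ L2) x = pval L1 x + pval L2 x"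
  by (induction L1) auto

lemma mpow_upd: "mpow x (\<mu>(i := k)) = x$i ^ k * (\<Prod>j\<in>UNIV-{i}. x$j ^ \<mu> j)"
proof -
  have "mpow x (\<mu>(i := k)) = x$i ^ ((\<mu>(i := k)) i) * (\<Prod>j\<in>UNIV-{i}. x$j ^ (\<mu>(i:=k)) j)"
    unfolding mpow_def by (subst prod.remove[where x=i]) auto
  also have "(\<Prod>j\<in>UNIV-{i}. x$j ^ (\<mu>(i:=k)) j) = (\<Prod>j\<in>UNIV-{i}. x$j ^ \<mu> j)"
    by (rule prod.cong) auto
  finally show ?thesis by (simp add: fun_upd_def)
qed

lemma mpow_split: "mpow x \<mu> = x$i ^ \<mu> i * (\<Prod>j\<in>UNIV-{i}. x$j ^ \<mu> j)"
  using mpow_upd[of x \<mu> i "\<mu> i"] by simp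

lemma line_nth: "(x + t *\<^sub>R axis i 1) $ j = x $ j + (if j = i then t else 0)"
  by (simp add: axis_def)

lemma mpow_line: "mpow (x + t *\<^sub>R axis i 1) \<mu> = (x$i + t) ^ \<mu> i * (\<Prod>j\<in>UNIV-{i}. x$j ^ \<mu> j)"
proof -
  have "mpow (x + t *\<^sub>R axis i 1) \<mu> = (x$i + t) ^ \<mu> i * (\<Prod>j\<in>UNIV-{i}. (x + t *\<^sub>R axis i 1)$j ^ \<mu> j)"
    using mpow_split[of "x + t *\<^sub>R axis i 1" \<mu> i] by (simp add: line_nth)
  also have "(\<Prod>j\<in>UNIV-{i}. (x + t *\<^sub>R axis i 1)$j ^ \<mu> j) = (\<Prod>j\<in>UNIV-{i}. x$j ^ \<mu> j)"
    by (rule prod.cong) (auto simp: axis_def)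
  finally show ?thesis .
qed

lemma mpow_deriv:
  "((\<lambda>t. mpow (x + t *\<^sub>R axis i 1) \<mu>) has_real_derivative real (\<mu> i) * mpow x (\<mu>(i := \<mu> i - 1))) (at 0)"
proof -
  let ?P = "\<Prod>j\<in>UNIV-{i}. x$j ^ \<mu> j"
  have "((\<lambda>t. (x$i + t) ^ \<mu> i * ?P) has_real_derivative (real (\<mu> i) * (x$i + 0) ^ (\<mu> i - 1) * 1) * ?P) (at 0)"
    by (intro derivative_eq_intros) auto
  then show ?thesis by (simp add: mpow_line mpow_upd mult.assoc)
qed

lemma pval_deriv:
  "((\<lambda>t. pval L (x + t *\<^sub>R axis i 1)) has_real_derivative pval (dl1 i L) x) (at 0)"
proof (induction L)
  case Nil
  then show ?case by (simp add: dl1_def)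
next
  case (Cons p L)
  have "((\<lambda>t. fst p * mpow (x + t *\<^sub>R axis i 1) (snd p) + pval L (x + t *\<^sub>R axis i 1)) has_real_derivative
     fst p * (real (snd p i) * mpow x ((snd p)(i := snd p i - 1))) + pval (dl1 i L) x) (at 0)"
    by (intro DERIV_add DERIV_cmult mpow_deriv Cons)
  then show ?case by (simp add: dl1_def mult.assoc)
qed

lemma mpow_suc: "mpow x (\<mu>(i := \<mu> i + 1)) = x$i * mpow x \<mu>"
  unfolding mpow_upd[of x \<mu> i] mpow_split[of x \<mu> i] by simp

lemma pval_dl2: "pval (dl2 a i L) x = -2 * a * x$i * pval L x"
proof (induction L)
  case Nil then show ?case by (simp add: dl2_def)
next
  case (Cons p L)
  have "pval (dl2 a i (p # L)) x = - 2 * a * fst p * mpow x ((snd p)(i := snd p i + 1)) + pval (dl2 a i L) x"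
    by (simp add: dl2_def)
  also have "\<dots> = -2 * a * x$i * pval (p # L) x"
    unfolding mpow_suc Cons by (simp add: algebra_simps)
  finally show ?case .
qed

lemma norm_line: fixes x :: "real^'n::finite" shows "(norm (x + t *\<^sub>R axis i 1))\<^sup>2 = (norm x)\<^sup>2 + 2 * t * x$i + t\<^sup>2"
proof -
  have e: "inner (axis i (1::real)) (axis i 1 :: real^'n) = 1" by (simp add: inner_axis_axis)
  have "(norm (x + t *\<^sub>R axis i 1))\<^sup>2 = inner (x + t *\<^sub>R axis i 1) (x + t *\<^sub>R axis i 1)"
    by (rule power2_norm_eq_inner)
  also have "\<dots> = inner x x + 2 * t * inner x (axis i 1) + t * t * inner (axis i (1::real)) (axis i 1)"
    by (simp add: inner_add_left inner_add_right inner_commute algebra_simps)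
  also have "\<dots> = (norm x)\<^sup>2 + 2 * t * x$i + t\<^sup>2"
    using power2_norm_eq_inner[of x] by (simp add: e inner_axis power2_eq_square)
  finally show ?thesis .
qed

lemma gauss_deriv:
  "((\<lambda>t. exp (- a * (norm (x + t *\<^sub>R axis i 1))\<^sup>2)) has_real_derivative (-2 * a * x$i) * exp (- a * (norm x)\<^sup>2)) (at 0)"
proof -
  have "((\<lambda>t. exp (- a * ((norm x)\<^sup>2 + 2 * t * x$i + t\<^sup>2))) has_real_derivative
      exp (- a * ((norm x)\<^sup>2 + 2 * 0 * x$i + 0\<^sup>2)) * (- a * (2 * 1 * x$i + 2 * 0 ^ 1 * 1))) (at 0)"
    by (intro derivative_eq_intros) auto
  then show ?thesis by (simp add: norm_line algebra_simps)
qed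

lemma pg_deriv:
  "((\<lambda>t. pg a L (x + t *\<^sub>R axis i 1)) has_real_derivative pg a (dl a i L) x) (at 0)"
proof -
  have "((\<lambda>t. pval L (x + t *\<^sub>R axis i 1) * exp (- a * (norm (x + t *\<^sub>R axis i 1))\<^sup>2)) has_real_derivative
      pval (dl1 i L) x * exp (- a * (norm (x + 0 *\<^sub>R axis i 1))\<^sup>2) + ((-2 * a * x$i) * exp (- a * (norm x)\<^sup>2)) * pval L (x + 0 *\<^sub>R axis i 1)) (at 0)"
    by (intro DERIV_mult pval_deriv gauss_deriv)
  then show ?thesis by (simp add: pg_def dl_def pval_append pval_dl2 algebra_simps)
qed

lemma partial_pg: "partial i (pg a L) = pg a (dl a i L)"
  unfolding partial_def by (rule ext) (rule DERIV_imp_deriv[OF pg_deriv])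

lemma iter_partial_pg: "iter_partial xs (pg a L) = pg a (dli a xs L)"
  by (induction xs) (auto simp: iter_partial_def partial_pg)

lemma continuous_mpow: "continuous_on UNIV (\<lambda>x::real^'n::finite. mpow x \<mu>)"
  unfolding mpow_def by (intro continuous_intros)

lemma continuous_pval: "continuous_on UNIV (pval L)"
proof (induction L)
  case Nil then show ?case by (simp add: continuous_on_const)
next
  case (Cons p L)
  have "continuous_on UNIV (\<lambda>x. fst p * mpow x (snd p) + pval L x)"
    by (intro continuous_intros continuous_mpow Cons)
  then show ?case by simp
qed

lemma smooth_pg: fixes L :: "(real \<times> ('n::finite \<Rightarrow> nat)) list" shows "smooth_fun (pg a L)"
  unfolding smooth_fun_def iter_partial_pg
proof (intro allI conjI)
  fix xs
  show "continuous_on UNIV (pg a (dli a xs L))"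
    unfolding pg_def[abs_def] by (intro continuous_intros continuous_pval)
  fix i x
  show "(\<lambda>t. pg a (dli a xs L) (x + t *\<^sub>R axis i 1)) differentiable at 0"
    using pg_deriv real_differentiable_def by blast
qed



lemma exists_counts: "\<exists>xs. \<forall>i. count_list xs i = (\<beta>::'n::finite \<Rightarrow> nat) i"
proof -
  have fin: "finite {x. \<beta> x > 0}" by simp
  obtain xs where "mset xs = Abs_multiset \<beta>" using ex_mset by blast
  then have "\<forall>i. count_list xs i = \<beta> i"
    by (metis count_mset count_Abs_multiset[OF fin])
  then show ?thesis by blast
qed

lemma mpartial_eq: "mpartial \<beta> f = iter_partial (SOME xs. \<forall>i. count_list xs i = \<beta> i) f"
  by (simp add: mpartial_def)

lemma some_counts: "\<forall>i. count_list (SOME xs. \<forall>i. count_list xs i = \<beta> i) i = (\<beta>::'n::finite \<Rightarrow> nat) i"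
  using someI_ex[OF exists_counts] by blast

lemma length_count: "length xs = (\<Sum>i\<in>(UNIV::'n::finite set). count_list xs i)"
proof (induction xs)
  case Nil then show ?case by simp
next
  case (Cons a xs)
  have "(\<Sum>i\<in>(UNIV::'n set). count_list (a # xs) i) = (\<Sum>i\<in>UNIV. count_list xs i + (if a = i then 1 else 0))"
    by (rule sum.cong) auto
  also have "\<dots> = (\<Sum>i\<in>UNIV. count_list xs i) + 1"
    by (simp add: sum.distrib)
  finally show ?case using Cons by simp
qed

lemma length_some: "length (SOME xs. \<forall>i. count_list xs i = \<beta> i) = mlen (\<beta>::'n::finite \<Rightarrow> nat)"
  unfolding mlen_def length_count using some_counts[of \<beta>] by simp

lemma counts_zero: "(\<forall>i. count_list xs i = 0) \<Longrightarrow> xs = []"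
  by (cases xs) (auto, metis add_is_0 one_neq_zero)

lemma mpartial_zero: "mpartial (\<lambda>_. 0::nat) f = (f :: real^'n::finite \<Rightarrow> real)"
proof -
  have "(SOME xs. \<forall>i. count_list xs i = (\<lambda>_::'n. 0::nat) i) = []"
    using some_counts[of "\<lambda>_::'n. 0::nat"] counts_zero by blast
  then show ?thesis by (simp add: mpartial_def iter_partial_def)
qed

definition scale :: "real \<Rightarrow> (real \<times> ('n::finite \<Rightarrow> nat)) list \<Rightarrow> (real \<times> ('n \<Rightarrow> nat)) list" where
  "scale c L = map (\<lambda>p. (c * fst p, snd p)) L"

lemma pval_scale: "pval (scale c L) x = c * pval L x"
  by (induction L) (auto simp: scale_def algebra_simps)

lemma gauss_pg: "(\<lambda>y::real^'n::finite. exp (- (norm y)\<^sup>2)) = pg 1 [(1, \<lambda>_. 0)]"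
  by (rule ext) (simp add: pg_def mpow_def)

lemma hermite_pg: "\<exists>L. hermite_fun (\<gamma>::'n::finite \<Rightarrow> nat) = pg (1/2) L"
proof -
  define xs where "xs = (SOME xs. \<forall>i. count_list xs i = \<gamma> i)"
  define L0 where "L0 = dli 1 xs [(1::real, \<lambda>_::'n. 0::nat)]"
  define c where "c = (2 ^ mlen \<gamma> * (\<Prod>i\<in>UNIV. fact (\<gamma> i)) * pi powr (real CARD('n) / 2)) powr (-1/2)"
  have mp: "mpartial \<gamma> (\<lambda>y::real^'n. exp (- (norm y)\<^sup>2)) = pg 1 L0"
    unfolding mpartial_def gauss_pg iter_partial_pg xs_def L0_def by simp
  have "hermite_fun \<gamma> x = pg (1/2) (scale (c * (-1) ^ mlen \<gamma>) L0) x" for x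
  proof -
    have "exp ((norm x)\<^sup>2) * exp (- 1 * (norm x)\<^sup>2) = 1"
      by (simp add: exp_minus field_simps)
    then have hp: "hermite_poly \<gamma> x = (-1) ^ mlen \<gamma> * pval L0 x"
      unfolding hermite_poly_def mp pg_def by (metis (no_types, lifting) mult.assoc mult.commute mult.left_neutral)
    show ?thesis
      unfolding hermite_fun_def hp pg_def pval_scale c_def[symmetric] by simp
  qed
  then show ?thesis by blast
qed

lemma hermite_zero: "hermite_fun (\<lambda>_::'n::finite. 0::nat) x =
   (pi powr (real CARD('n) / 2)) powr (-1/2) * exp (- (norm x)\<^sup>2 / 2)"
proof -
  have "hermite_poly (\<lambda>_::'n::finite. 0::nat) x = 1"
    unfolding hermite_poly_def mpartial_zero by (simp add: mlen_def exp_minus field_simps)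
  then show ?thesis unfolding hermite_fun_def by (simp add: mlen_def)
qed



definition sq :: "nat \<Rightarrow> real" where "sq m = sqrt (real m ^ m)"

lemma sq_nonneg: "sq m \<ge> 0" by (simp add: sq_def)

lemma sq_mono: "m \<le> m' \<Longrightarrow> sq m \<le> sq m'"
proof -
  assume "m \<le> m'"
  have "real m ^ m \<le> real m' ^ m' "
  proof (cases "m' = 0")
    case True then show ?thesis using \<open>m \<le> m'\<close> by simp
  next
    case False
    have "real m ^ m \<le> real m' ^ m" by (rule power_mono) (use \<open>m \<le> m'\<close> in auto)
    also have "\<dots> \<le> real m' ^ m'" by (rule power_increasing) (use \<open>m \<le> m'\<close> False in auto)
    finally show ?thesis .
  qed
  then show ?thesis unfolding sq_def by simp
qed

lemma key_exp:
  assumes r: "r \<ge> (0::real)"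
  shows "r ^ m * exp (- r\<^sup>2 / 2) \<le> sq m"
proof (cases "m = 0")
  case True
  then show ?thesis by (simp add: sq_def)
next
  case False
  then have mpos: "real m > 0" by simp
  have "(r\<^sup>2 / m) ^ m \<le> exp (r\<^sup>2 / m) ^ m"
  proof (rule power_mono)
    show "r\<^sup>2 / m \<le> exp (r\<^sup>2 / m)" using exp_ge_add_one_self[of "r\<^sup>2 / m"] by linarith
    show "0 \<le> r\<^sup>2 / m" using mpos by simp
  qed
  also have "\<dots> = exp (r\<^sup>2)"
    using exp_of_nat_mult[of m "r\<^sup>2 / m", symmetric] mpos by simp
  finally have a: "(r\<^sup>2 / m) ^ m \<le> exp (r\<^sup>2)" .
  have "(r ^ m)\<^sup>2 = real m ^ m * (r\<^sup>2 / m) ^ m"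
    using mpos by (simp add: power_divide power_mult_distrib[symmetric] field_simps flip: power_mult)
  also have "\<dots> \<le> real m ^ m * exp (r\<^sup>2)"
    by (rule mult_left_mono[OF a]) simp
  also have "\<dots> = (sq m * exp (r\<^sup>2 / 2))\<^sup>2"
    by (simp add: sq_def power_mult_distrib flip: exp_of_nat_mult)
  finally have "r ^ m \<le> sq m * exp (r\<^sup>2 / 2)"
    by (rule power2_le_imp_le) (simp add: sq_def)
  then have "r ^ m * exp (- r\<^sup>2 / 2) \<le> sq m * exp (r\<^sup>2 / 2) * exp (- r\<^sup>2 / 2)"
    by (rule mult_right_mono) simp
  also have "\<dots> = sq m" by (simp add: mult.assoc flip: exp_add)
  finally show ?thesis .
qed

lemma mpow_abs_le: "\<bar>mpow x \<mu>\<bar> \<le> norm x ^ mlen \<mu>"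
proof -
  have "\<bar>mpow x \<mu>\<bar> = (\<Prod>i\<in>UNIV. \<bar>x$i\<bar> ^ \<mu> i)"
    by (simp add: mpow_def abs_prod power_abs)
  also have "\<dots> \<le> (\<Prod>i\<in>UNIV. norm x ^ \<mu> i)"
    by (intro prod_mono conjI power_mono component_le_norm_cart) auto
  also have "\<dots> = norm x ^ mlen \<mu>" by (simp add: mlen_def power_sum)
  finally show ?thesis .
qed

lemma mpow_mult: "mpow x \<alpha> * mpow x \<mu> = mpow x (\<lambda>i. \<alpha> i + \<mu> i)"
  by (simp add: mpow_def power_add prod.distrib)

lemma mlen_add: "mlen (\<lambda>i. \<alpha> i + \<mu> i) = mlen \<alpha> + mlen \<mu>"
  by (simp add: mlen_def sum.distrib)

fun Fw :: "nat \<Rightarrow> (real \<times> ('n::finite \<Rightarrow> nat)) list \<Rightarrow> real" where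
  "Fw a [] = 0"
| "Fw a (p # L) = \<bar>fst p\<bar> * sq (mlen (snd p) + a) + Fw a L"

lemma Fw_nonneg: "Fw a L \<ge> 0"
  by (induction L) (auto intro!: add_nonneg_nonneg mult_nonneg_nonneg sq_nonneg)

lemma Fw_append: "Fw a (L1 @ L2) = Fw a L1 + Fw a L2"
  by (induction L1) auto

lemma bound_mono:
  "\<bar>mpow x \<alpha> * mpow x \<mu>\<bar> * exp (- (1/2) * (norm x)\<^sup>2) \<le> sq (mlen \<mu> + mlen \<alpha>)"
proof -
  have "\<bar>mpow x \<alpha> * mpow x \<mu>\<bar> \<le> norm x ^ (mlen \<mu> + mlen \<alpha>)"
    using mpow_abs_le[of x "\<lambda>i. \<alpha> i + \<mu> i"] by (simp add: mpow_mult mlen_add add.commute)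
  then have "\<bar>mpow x \<alpha> * mpow x \<mu>\<bar> * exp (- (norm x)\<^sup>2 / 2) \<le> norm x ^ (mlen \<mu> + mlen \<alpha>) * exp (- (norm x)\<^sup>2 / 2)"
    by (intro mult_right_mono) auto
  moreover have "exp (- (1/2) * (norm x)\<^sup>2) = exp (- (norm x)\<^sup>2 / 2)" by simp
  ultimately have "\<bar>mpow x \<alpha> * mpow x \<mu>\<bar> * exp (- (1/2) * (norm x)\<^sup>2) \<le> norm x ^ (mlen \<mu> + mlen \<alpha>) * exp (- (norm x)\<^sup>2 / 2)"
    by simp
  also have "\<dots> \<le> sq (mlen \<mu> + mlen \<alpha>)" by (rule key_exp) simp
  finally show ?thesis .
qed

lemma bound_pg: "\<bar>mpow x \<alpha> * pg (1/2) M x\<bar> \<le> Fw (mlen \<alpha>) M"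
proof (induction M)
  case Nil then show ?case by (simp add: pg_def)
next
  case (Cons p M)
  let ?E = "exp (- (1/2) * (norm x)\<^sup>2)"
  have "mpow x \<alpha> * pg (1/2) (p # M) x = fst p * (mpow x \<alpha> * mpow x (snd p) * ?E) + mpow x \<alpha> * pg (1/2) M x"
    by (simp add: pg_def algebra_simps)
  then have "\<bar>mpow x \<alpha> * pg (1/2) (p # M) x\<bar> \<le> \<bar>fst p\<bar> * (\<bar>mpow x \<alpha> * mpow x (snd p)\<bar> * ?E) + \<bar>mpow x \<alpha> * pg (1/2) M x\<bar>"
    by (simp add: abs_mult) (metis abs_triangle_ineq abs_mult abs_exp_cancel mult.assoc)
  also have "\<dots> \<le> \<bar>fst p\<bar> * sq (mlen (snd p) + mlen \<alpha>) + Fw (mlen \<alpha>) M"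
    by (intro add_mono mult_left_mono bound_mono Cons) auto
  finally show ?case by simp
qed

lemma mlen_upd: "mlen (\<mu>(i := k)) + \<mu> i = mlen \<mu> + k"
proof -
  have a: "mlen (\<mu>(i := k)) = k + (\<Sum>j\<in>UNIV-{i}. \<mu> j)"
    unfolding mlen_def by (subst sum.remove[where x=i]) (auto intro!: sum.cong)
  have b: "mlen \<mu> = \<mu> i + (\<Sum>j\<in>UNIV-{i}. \<mu> j)"
    unfolding mlen_def by (subst sum.remove[where x=i]) auto
  show ?thesis using a b by simp
qed

lemma le_mlen: "\<mu> i \<le> mlen \<mu>"
  unfolding mlen_def by (rule member_le_sum) auto

lemma sq_step: "k \<le> q + 1 \<Longrightarrow> real k * sq q \<le> sq (q + 2)"
proof -
  assume k: "k \<le> q + 1"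
  have "(real k)\<^sup>2 * real q ^ q \<le> (real q + 2)\<^sup>2 * (real q + 2) ^ q"
    by (intro mult_mono power_mono) (use k in auto)
  also have "\<dots> = real (q + 2) ^ (q + 2)" by (simp add: power_add power2_eq_square add.commute mult.commute mult.left_commute)
  finally have "(real k * sq q)\<^sup>2 \<le> (sq (q+2))\<^sup>2"
    by (simp add: sq_def power_mult_distrib)
  then show ?thesis by (rule power2_le_imp_le) (simp add: sq_def)
qed

lemma Fw_dl1: "Fw a (dl1 i M) \<le> Fw (a + 1) M"
proof (induction M)
  case Nil then show ?case by (simp add: dl1_def)
next
  case (Cons p M)
  obtain c \<mu> where p: "p = (c, \<mu>)" by force
  have "\<bar>c * real (\<mu> i)\<bar> * sq (mlen (\<mu>(i := \<mu> i - 1)) + a) \<le> \<bar>c\<bar> * sq (mlen \<mu> + (a + 1))"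
  proof (cases "\<mu> i = 0")
    case True then show ?thesis by (simp add: mult_nonneg_nonneg sq_nonneg)
  next
    case False
    have m: "mlen (\<mu>(i := \<mu> i - 1)) + 1 = mlen \<mu>"
      using mlen_upd[of \<mu> i "\<mu> i - 1"] False by simp
    have "real (\<mu> i) * sq (mlen (\<mu>(i := \<mu> i - 1)) + a) \<le> sq (mlen (\<mu>(i := \<mu> i - 1)) + a + 2)"
      by (rule sq_step) (use m le_mlen[of \<mu> i] in simp)
    also have "mlen (\<mu>(i := \<mu> i - 1)) + a + 2 = mlen \<mu> + (a + 1)" using m by simp
    finally have X: "real (\<mu> i) * sq (mlen (\<mu>(i := \<mu> i - 1)) + a) \<le> sq (mlen \<mu> + (a + 1))" .
    show ?thesis using mult_left_mono[OF X abs_ge_zero[of c]] by (simp only: abs_mult abs_of_nat mult.assoc)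
  qed
  then show ?case using Cons by (simp add: dl1_def p)
qed

lemma Fw_dl2: "Fw a (dl2 (1/2) i M) = Fw (a + 1) M"
proof (induction M)
  case Nil then show ?case by (simp add: dl2_def)
next
  case (Cons p M)
  have m: "mlen ((snd p)(i := snd p i + 1)) = mlen (snd p) + 1"
    using mlen_upd[of "snd p" i "snd p i + 1"] by simp
  show ?case using Cons by (simp add: dl2_def m[simplified])
qed

lemma Fw_dl: "Fw a (dl (1/2) i M) \<le> 2 * Fw (a + 1) M"
  unfolding dl_def Fw_append Fw_dl2 using Fw_dl1[of a i M] by simp

lemma Fw_dli: "Fw a (dli (1/2) xs M) \<le> 2 ^ length xs * Fw (a + length xs) M"
proof (induction xs arbitrary: a)
  case Nil then show ?case by simp
next
  case (Cons i xs)
  have "Fw a (dli (1/2) (i # xs) M) \<le> 2 * Fw (a + 1) (dli (1/2) xs M)"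
    using Fw_dl[of a i "dli (1/2) xs M"] by simp
  also have "\<dots> \<le> 2 * (2 ^ length xs * Fw (a + 1 + length xs) M)"
    using Cons[of "a+1"] by simp
  finally show ?case by (simp add: algebra_simps)
qed

fun Sabs :: "(real \<times> ('n::finite \<Rightarrow> nat)) list \<Rightarrow> real" where
  "Sabs [] = 0"
| "Sabs (p # L) = \<bar>fst p\<bar> + Sabs L"

fun Dg :: "(real \<times> ('n::finite \<Rightarrow> nat)) list \<Rightarrow> nat" where
  "Dg [] = 0"
| "Dg (p # L) = max (mlen (snd p)) (Dg L)"

lemma Sabs_nonneg: "Sabs L \<ge> 0" by (induction L) auto

lemma Fw_le: "Fw a M \<le> Sabs M * sq (Dg M + a)"
proof (induction M)
  case Nil then show ?case by simp
next
  case (Cons p M)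
  have "\<bar>fst p\<bar> * sq (mlen (snd p) + a) \<le> \<bar>fst p\<bar> * sq (Dg (p # M) + a)"
    by (intro mult_left_mono sq_mono) auto
  moreover have "Sabs M * sq (Dg M + a) \<le> Sabs M * sq (Dg (p # M) + a)"
    by (intro mult_left_mono sq_mono Sabs_nonneg) auto
  ultimately show ?case using Cons by (simp add: algebra_simps)
qed



lemma numE:
  fixes D n :: nat and \<kappa> :: real
  assumes k0: "\<kappa> \<ge> 0" and kQ: "\<kappa> * (3 * 2 ^ (D + 2))\<^sup>2 \<le> 1"
  shows "2 ^ n * sq (D + n) \<le> (3 * 2 ^ (D + 1)) ^ (D + 1) *
      ((3 * 2 ^ (D + 2)) * sqrt (real (D + n + 1))) ^ n *
      exp (- \<kappa> * ((3 * 2 ^ (D + 2)) * sqrt (real (D + n + 1)))\<^sup>2)"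
proof -
  define Q :: real where "Q = 3 * 2 ^ (D + 2)"
  define N :: nat where "N = D + n + 1"
  have N1: "real N \<ge> 1" unfolding N_def by simp
  have sN: "sqrt (real N) \<ge> 0" by simp
  have "exp (- real N) \<le> exp (- \<kappa> * (Q * sqrt (real N))\<^sup>2)"
  proof -
    have "\<kappa> * (Q * sqrt (real N))\<^sup>2 = (\<kappa> * Q\<^sup>2) * real N"
      by (simp add: power_mult_distrib)
    also have "\<dots> \<le> 1 * real N" by (rule mult_right_mono) (use kQ Q_def in auto)
    finally show ?thesis by simp
  qed
  have e3: "exp (real N) \<le> 3 ^ N"
    using exp_of_nat_mult[of N "1::real"] power_mono[OF exp_le, of N] by simp
  have "sq (D + n) \<le> sq N" by (rule sq_mono) (simp add: N_def)
  also have "sq N = sqrt (real N) ^ n * sqrt (real N ^ (D + 1))"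
    by (simp add: sq_def N_def power_add real_sqrt_mult real_sqrt_power)
  also have "\<dots> \<le> sqrt (real N) ^ n * real N ^ (D + 1)"
  proof (rule mult_left_mono)
    have "real N ^ (D+1) \<ge> 1" using N1 one_le_power by blast
    then show "sqrt (real N ^ (D + 1)) \<le> real N ^ (D + 1)"
    proof -
      let ?y = "real N ^ (D + 1)"
      have s1: "sqrt ?y \<ge> 1" using \<open>?y \<ge> 1\<close> by simp
      have "sqrt ?y * 1 \<le> sqrt ?y * sqrt ?y" by (rule mult_left_mono) (use s1 in auto)
      also have "\<dots> = ?y" using \<open>?y \<ge> 1\<close> by simp
      finally show ?thesis by simp
    qed
  qed simp
  also have "\<dots> \<le> sqrt (real N) ^ n * (2 ^ N) ^ (D + 1)"
    by (intro mult_left_mono power_mono) (use less_exp[of N] in \<open>simp_all add: less_imp_le\<close>)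
  finally have a: "sq (D + n) \<le> sqrt (real N) ^ n * (2 ^ N) ^ (D + 1)" .
  have "2 ^ n * sq (D + n) \<le> 2 ^ n * (sqrt (real N) ^ n * (2 ^ N) ^ (D + 1))"
    using a by simp
  also have "\<dots> = 2 ^ n * sqrt (real N) ^ n * (2 ^ (D + 1)) ^ N * 1"
    by (simp add: power_mult[symmetric] mult.commute)
  also have "\<dots> \<le> 2 ^ n * sqrt (real N) ^ n * (2 ^ (D + 1)) ^ N * (3 ^ N * exp (- real N))"
  proof -
    have "1 = exp (real N) * exp (- real N)" by (simp flip: exp_add)
    also have "\<dots> \<le> 3 ^ N * exp (- real N)" by (rule mult_right_mono[OF e3]) simp
    finally show ?thesis by (intro mult_left_mono) auto
  qed
  also have "\<dots> = (3 * 2 ^ (D + 1)) ^ (D + 1) * (Q * sqrt (real N)) ^ n * exp (- real N)"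
  proof -
    have h6: "(6::real)^D = 2^D*3^D" by (simp flip: power_mult_distrib)
    have h12: "(12::real)^n = 2^n*(2^n*3^n)" by (simp flip: power_mult_distrib)
    show ?thesis by (simp add: Q_def N_def power_add power_mult_distrib algebra_simps h6 h12)
  qed
  also have "\<dots> \<le> (3 * 2 ^ (D + 1)) ^ (D + 1) * (Q * sqrt (real N)) ^ n * exp (- \<kappa> * (Q * sqrt (real N))\<^sup>2)"
    by (intro mult_left_mono \<open>exp (- real N) \<le> _\<close>) (simp add: Q_def)
  finally show ?thesis unfolding Q_def N_def .
qed



lemma wf_nonneg: "weight_function \<omega> \<Longrightarrow> t \<ge> 0 \<Longrightarrow> \<omega> t \<ge> 0"
  unfolding weight_function_def by blast

lemma wf_mono: "weight_function \<omega> \<Longrightarrow> 0 \<le> s \<Longrightarrow> s \<le> t \<Longrightarrow> \<omega> s \<le> \<omega> t"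
proof -
  assume w: "weight_function \<omega>" and st: "0 \<le> s" "s \<le> t"
  then have "mono_on {0..} \<omega>" unfolding weight_function_def by blast
  then show ?thesis by (rule mono_onD) (use st in auto)
qed

lemma wf_convex: "weight_function \<omega> \<Longrightarrow> convex_on {0..} (\<lambda>t. \<omega> (exp t))"
  unfolding weight_function_def by blast

lemma wf_log: "weight_function \<omega> \<Longrightarrow> (\<lambda>t. ln t) \<in> o[at_top](\<omega>)"
  unfolding weight_function_def by blast

lemma phi_bdd:
  assumes w: "weight_function \<omega>" and s: "s \<ge> 0"
  shows "bdd_above ((\<lambda>t. t * s - \<omega> (exp t)) ` {0..})"
proof -
  have "eventually (\<lambda>t. norm (ln t) \<le> (1 / (s + 1)) * norm (\<omega> t)) at_top"
    by (rule landau_o.smallD[OF wf_log[OF w]]) (use s in simp)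
  then obtain N where N: "\<And>t. t \<ge> N \<Longrightarrow> norm (ln t) \<le> (1 / (s + 1)) * norm (\<omega> t)"
    by (auto simp: eventually_at_top_linorder)
  define t0 where "t0 = max N 1"
  have "T * s - \<omega> (exp T) \<le> s * ln t0" if T: "T \<ge> 0" for T
  proof (cases "exp T \<ge> t0")
    case True
    then have "N \<le> exp T" using t0_def by simp
    then have "norm (ln (exp T)) \<le> (1 / (s + 1)) * norm (\<omega> (exp T))" by (rule N)
    moreover have "\<omega> (exp T) \<ge> 0" using wf_nonneg[OF w, of "exp T"] by simp
    ultimately have "T \<le> \<omega> (exp T) / (s + 1)" using T by (simp add: abs_of_nonneg)
    then have "T * (s + 1) \<le> \<omega> (exp T)" using s by (simp add: field_simps)
    moreover have "s * ln t0 \<ge> 0" using s t0_def by simp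
    ultimately show ?thesis using T by (simp add: algebra_simps)
  next
    case False
    then have "T \<le> ln t0" using t0_def by (metis exp_le_cancel_iff exp_ln less_le_not_le max.strict_coboundedI2 nle_le zero_less_one)
    then have "T * s \<le> s * ln t0" using s by (metis mult.commute mult_left_mono)
    then show ?thesis using wf_nonneg[OF w, of "exp T"] by simp
  qed
  then show ?thesis by (intro bdd_aboveI2) auto
qed

lemma phi_star_ge:
  assumes w: "weight_function \<omega>" and s: "s \<ge> 0" and T: "T \<ge> 0"
  shows "T * s - \<omega> (exp T) \<le> phi_star \<omega> s"
  unfolding phi_star_def by (rule cSUP_upper[OF _ phi_bdd[OF w s]]) (use T in simp)

lemma W_lower:
  assumes w: "weight_function \<omega>" and bd: "\<forall>t\<ge>0. \<omega> t \<le> K * t\<^sup>2 + K'"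
    and l: "lam > 0" and r: "r \<ge> 1"
  shows "r ^ mlen \<alpha> * exp (- (K / lam) * r\<^sup>2) * exp (- K' / lam) \<le> Wseq \<omega> lam \<alpha>"
proof -
  define n where "n = mlen \<alpha>"
  have rpos: "r > 0" using r by simp
  have "ln r * (lam * real n) - \<omega> (exp (ln r)) \<le> phi_star \<omega> (lam * real n)"
    by (rule phi_star_ge[OF w]) (use l r in auto)
  then have "lam * (real n * ln r) - (K * r\<^sup>2 + K') \<le> phi_star \<omega> (lam * real n)"
    using bd rpos by (auto simp: algebra_simps) (smt (verit) r)
  then have "(1 / lam) * (lam * (real n * ln r) - (K * r\<^sup>2 + K')) \<le> (1 / lam) * phi_star \<omega> (lam * real n)"
    by (rule mult_left_mono) (use l in simp)
  moreover have "(1 / lam) * (lam * (real n * ln r) - (K * r\<^sup>2 + K')) = real n * ln r - (K / lam) * r\<^sup>2 - K' / lam"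
    using l by (simp add: field_simps)
  ultimately have "real n * ln r - (K / lam) * r\<^sup>2 - K' / lam \<le> (1 / lam) * phi_star \<omega> (lam * real n)"
    by simp
  then have "exp (real n * ln r - (K / lam) * r\<^sup>2 - K' / lam) \<le> Wseq \<omega> lam \<alpha>"
    unfolding Wseq_def n_def by simp
  moreover have "exp (real n * ln r - (K / lam) * r\<^sup>2 - K' / lam) = r ^ n * exp (- (K / lam) * r\<^sup>2) * exp (- K' / lam)"
    using rpos by (simp add: exp_diff exp_of_nat_mult exp_minus exp_add field_simps)
  ultimately show ?thesis by (simp add: n_def)
qed

lemma bound_eventually:
  assumes w: "weight_function \<omega>" and c: "c \<ge> 0"
    and ev: "eventually (\<lambda>t. norm (\<omega> t) \<le> c * norm (t\<^sup>2)) at_top"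
  shows "\<exists>K'. \<forall>t\<ge>0. \<omega> t \<le> c * t\<^sup>2 + K'"
proof -
  obtain N where N: "\<And>t. t \<ge> N \<Longrightarrow> norm (\<omega> t) \<le> c * norm (t\<^sup>2)"
    using ev by (auto simp: eventually_at_top_linorder)
  define N' where "N' = max N 0"
  have "\<omega> t \<le> c * t\<^sup>2 + \<omega> N'" if t: "t \<ge> 0" for t
  proof (cases "t \<le> N'")
    case True
    then have "\<omega> t \<le> \<omega> N'" by (rule wf_mono[OF w t])
    moreover have "c * t\<^sup>2 \<ge> 0" using c by simp
    ultimately show ?thesis by simp
  next
    case False
    then have "norm (\<omega> t) \<le> c * norm (t\<^sup>2)" using N N'_def by simp
    moreover have "\<omega> N' \<ge> 0" by (rule wf_nonneg[OF w]) (simp add: N'_def)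
    ultimately show ?thesis by simp
  qed
  then show ?thesis by blast
qed

lemma forward:
  assumes w: "weight_function \<omega>" and bd: "\<forall>t\<ge>0. \<omega> t \<le> K * t\<^sup>2 + K'" and K: "K \<ge> 0"
    and l: "lam > 0" and kQ: "(K / lam) * (3 * 2 ^ (Dg L + 2))\<^sup>2 \<le> 1"
  shows "W_norm_finite \<omega> lam (pg (1/2) (L :: (real \<times> ('n::finite \<Rightarrow> nat)) list))"
  unfolding W_norm_finite_def
proof (intro exI allI)
  fix \<alpha> \<beta> :: "'n \<Rightarrow> nat" and x :: "real^'n"
  define D where "D = Dg L"
  define n where "n = mlen \<alpha> + mlen \<beta>"
  define xs where "xs = (SOME xs. \<forall>i. count_list xs i = \<beta> i)"
  define r :: real where "r = (3 * 2 ^ (D + 2)) * sqrt (real (D + n + 1))"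
  have r1: "r \<ge> 1"
  proof -
    have "(1::real) \<le> 2 ^ (D + 2)" by (rule one_le_power) simp
    then have "(1::real) \<le> 3 * 2 ^ (D + 2)" by simp
    moreover have "1 \<le> sqrt (real (D + n + 1))" by simp
    ultimately show ?thesis unfolding r_def using mult_mono by fastforce
  qed
  have lx: "length xs = mlen \<beta>" unfolding xs_def by (rule length_some)
  have "\<bar>mpow x \<alpha> * mpartial \<beta> (pg (1/2) L) x\<bar> = \<bar>mpow x \<alpha> * pg (1/2) (dli (1/2) xs L) x\<bar>"
    by (simp add: mpartial_def iter_partial_pg xs_def)
  also have "\<dots> \<le> Fw (mlen \<alpha>) (dli (1/2) xs L)" by (rule bound_pg)
  also have "\<dots> \<le> 2 ^ mlen \<beta> * Fw (mlen \<alpha> + mlen \<beta>) L" using Fw_dli[of "mlen \<alpha>" xs L] lx by simp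
  also have "\<dots> \<le> 2 ^ n * (Sabs L * sq (D + n))"
  proof (rule mult_mono)
    show "(2::real) ^ mlen \<beta> \<le> 2 ^ n" by (rule power_increasing) (auto simp: n_def)
    show "Fw (mlen \<alpha> + mlen \<beta>) L \<le> Sabs L * sq (D + n)" unfolding n_def D_def by (rule Fw_le)
  qed (auto intro: Fw_nonneg)
  also have "\<dots> = Sabs L * (2 ^ n * sq (D + n))" by simp
  also have "\<dots> \<le> Sabs L * ((3 * 2 ^ (D + 1)) ^ (D + 1) * r ^ n * exp (- (K / lam) * r\<^sup>2))"
    unfolding r_def by (intro mult_left_mono numE Sabs_nonneg) (use K l kQ D_def in auto)
  also have "\<dots> = Sabs L * (3 * 2 ^ (D + 1)) ^ (D + 1) * exp (K' / lam) * (r ^ n * exp (- (K / lam) * r\<^sup>2) * exp (- K' / lam))"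
    by (simp add: exp_minus field_simps)
  also have "\<dots> \<le> Sabs L * (3 * 2 ^ (D + 1)) ^ (D + 1) * exp (K' / lam) * Wseq \<omega> lam (\<lambda>i. \<alpha> i + \<beta> i)"
  proof (rule mult_left_mono)
    show "r ^ n * exp (- (K / lam) * r\<^sup>2) * exp (- K' / lam) \<le> Wseq \<omega> lam (\<lambda>i. \<alpha> i + \<beta> i)"
      using W_lower[OF w bd l r1, of "\<lambda>i. \<alpha> i + \<beta> i"] by (simp add: mlen_add n_def)
  qed (intro mult_nonneg_nonneg Sabs_nonneg; simp)
  finally show "\<bar>mpow x \<alpha> * mpartial \<beta> (pg (1/2) L) x\<bar> \<le> Sabs L * (3 * 2 ^ (Dg L + 1)) ^ (Dg L + 1) * exp (K' / lam) * Wseq \<omega> lam (\<lambda>i. \<alpha> i + \<beta> i)"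
    unfolding D_def .
qed



lemma subgrad:
  assumes w: "weight_function \<omega>" and T0: "T0 > 0"
  shows "\<exists>s0\<ge>0. \<forall>T\<ge>0. \<omega> (exp T) \<ge> \<omega> (exp T0) + s0 * (T - T0)"
proof -
  define f where "f = (\<lambda>t. \<omega> (exp t))"
  have cv: "convex_on {0..} f" unfolding f_def by (rule wf_convex[OF w])
  have fmono: "a \<le> b \<Longrightarrow> f a \<le> f b" for a b unfolding f_def by (rule wf_mono[OF w]) auto
  define A where "A = (\<lambda>T1. (f T1 - f T0) / (T1 - T0)) ` {0..<T0}"
  have Ane: "A \<noteq> {}" unfolding A_def using T0 by auto
  have slope: "(f T1 - f T0) / (T1 - T0) \<le> (f T0 - f T) / (T0 - T)" if "0 \<le> T1" "T1 < T0" "T0 < T" for T1 T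
  proof -
    have "(f T1 - f T0) / (T1 - T0) \<le> (f T1 - f T) / (T1 - T)"
      by (rule convex_on_slope_le(1)[OF cv]) (use that in auto)
    also have "\<dots> \<le> (f T0 - f T) / (T0 - T)"
      by (rule convex_on_slope_le(2)[OF cv]) (use that in auto)
    finally show ?thesis .
  qed
  have Abdd: "bdd_above A"
    unfolding A_def
  proof (rule bdd_aboveI2[where M = "(f T0 - f (T0+1)) / (T0 - (T0 + 1))"])
    fix x assume "x \<in> {0..<T0}"
    then show "(f x - f T0) / (x - T0) \<le> (f T0 - f (T0+1)) / (T0 - (T0 + 1))"
      using slope[of x "T0+1"] by simp
  qed
  define s0 where "s0 = Sup A"
  have upper: "(f T1 - f T0) / (T1 - T0) \<le> s0" if "0 \<le> T1" "T1 < T0" for T1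
    unfolding s0_def by (rule cSup_upper[OF _ Abdd]) (use that in \<open>auto simp: A_def\<close>)
  have s0pos: "s0 \<ge> 0"
  proof -
    have "(f 0 - f T0) / (0 - T0) \<ge> 0"
      using fmono[of 0 T0] T0 by (simp add: divide_nonpos_pos)
    then show ?thesis using upper[of 0] T0 by simp
  qed
  have "f T \<ge> f T0 + s0 * (T - T0)" if T: "T \<ge> 0" for T
  proof (cases T0 T rule: linorder_cases)
    case less
    have "s0 \<le> (f T0 - f T) / (T0 - T)"
      unfolding s0_def by (rule cSup_least[OF Ane]) (use slope less in \<open>auto simp: A_def\<close>)
    moreover have "(f T0 - f T) / (T0 - T) = (f T - f T0) / (T - T0)"
      by (metis minus_diff_eq minus_divide_divide)
    ultimately have "s0 \<le> (f T - f T0) / (T - T0)" by simp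
    then have "s0 * (T - T0) \<le> f T - f T0" using less by (simp add: pos_le_divide_eq)
    then show ?thesis by simp
  next
    case equal then show ?thesis by simp
  next
    case greater
    have "(f T - f T0) / (T - T0) \<le> s0" by (rule upper) (use T greater in auto)
    then have "s0 * (T - T0) \<le> f T - f T0" using greater by (simp add: neg_divide_le_eq)
    then show ?thesis by simp
  qed
  then show ?thesis using s0pos unfolding f_def by blast
qed


lemma conv_bound:
  assumes w: "weight_function \<omega>" and l: "lam > 0" and c0: "c0 > 0" and u: "u > 1"
    and H: "\<And>n::nat. c0 * u ^ n * exp (- u\<^sup>2 / 2) \<le> C * exp ((1 / lam) * phi_star \<omega> (lam * real n))"
  shows "\<omega> u \<le> lam * (u\<^sup>2 / 2 + ln u + ln C - ln c0)"
proof -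
  define T0 where "T0 = ln u"
  have T0pos: "T0 > 0" using u T0_def by simp
  obtain s0 where s0: "s0 \<ge> 0" "\<And>T. T \<ge> 0 \<Longrightarrow> \<omega> (exp T) \<ge> \<omega> (exp T0) + s0 * (T - T0)"
    using subgrad[OF w T0pos] by blast
  define n where "n = nat \<lfloor>s0 / lam\<rfloor>"
  have n1: "lam * real n \<le> s0"
  proof -
    have "real n \<le> s0 / lam" unfolding n_def using s0(1) l by (simp add: of_nat_nat)
    then show ?thesis using l by (simp add: field_simps)
  qed
  have n2: "s0 \<le> lam * (real n + 1)"
  proof -
    have "s0 / lam \<le> real n + 1" unfolding n_def using s0(1) l
      by (simp add: of_nat_nat)
    then show ?thesis using l by (simp add: field_simps)
  qed
  have ps: "phi_star \<omega> (lam * real n) \<le> s0 * T0 - \<omega> (exp T0)"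
    unfolding phi_star_def
  proof (rule cSUP_least)
    show "{0::real..} \<noteq> {}" by auto
    fix T :: real assume "T \<in> {0..}"
    then have T: "T \<ge> 0" by simp
    have "T * (lam * real n) \<le> T * s0" using n1 T by (simp add: mult_left_mono)
    then show "T * (lam * real n) - \<omega> (exp T) \<le> s0 * T0 - \<omega> (exp T0)"
      using s0(2)[OF T] by (simp add: algebra_simps)
  qed
  have pos: "c0 * u ^ n * exp (- u\<^sup>2 / 2) > 0" using c0 u by simp
  then have "0 < C * exp ((1 / lam) * phi_star \<omega> (lam * real n))" using H[of n] by linarith
  then have Cpos: "C > 0" by (simp add: zero_less_mult_iff)
  have "ln (c0 * u ^ n * exp (- u\<^sup>2 / 2)) \<le> ln (C * exp ((1 / lam) * phi_star \<omega> (lam * real n)))"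
    using H[of n] pos by simp
  then have "ln c0 + real n * T0 - u\<^sup>2 / 2 \<le> ln C + (1 / lam) * phi_star \<omega> (lam * real n)"
    using c0 u Cpos by (simp add: ln_mult ln_realpow T0_def)
  then have "lam * (ln c0 + real n * T0 - u\<^sup>2 / 2) \<le> lam * (ln C + (1 / lam) * phi_star \<omega> (lam * real n))"
    using l by simp
  then have a: "lam * (ln c0 + real n * T0 - u\<^sup>2 / 2) \<le> lam * ln C + phi_star \<omega> (lam * real n)"
    using l by (simp add: algebra_simps)
  have "s0 * T0 \<le> lam * (real n + 1) * T0" using n2 T0pos by (simp add: mult_right_mono)
  then have "\<omega> (exp T0) \<le> lam * (real n + 1) * T0 - lam * (ln c0 + real n * T0 - u\<^sup>2 / 2) + lam * ln C"
    using ps a by linarith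
  also have "\<dots> = lam * (u\<^sup>2 / 2 + T0 + ln C - ln c0)" by (simp add: algebra_simps)
  finally show ?thesis using u by (simp add: T0_def)
qed


lemma axis_scale: "axis i (u::real) = u *\<^sub>R axis i 1"
  by (simp add: vec_eq_iff axis_def)

lemma converse:
  assumes w: "weight_function \<omega>"
    and H: "\<forall>lam>0. W_norm_finite \<omega> lam (hermite_fun (\<lambda>_::'n::finite. 0::nat))"
  shows "\<omega> \<in> o[at_top](\<lambda>t. t\<^sup>2)"
proof (rule landau_o.smallI)
  fix c :: real assume c: "c > 0"
  define lam where "lam = c / 4"
  have l: "lam > 0" using c lam_def by simp
  define c0 :: real where "c0 = (pi powr (real CARD('n) / 2)) powr (-1/2)"
  have c0: "c0 > 0" unfolding c0_def by simp
  obtain C where C: "\<And>\<alpha> \<beta> x. \<bar>mpow x \<alpha> * mpartial \<beta> (hermite_fun (\<lambda>_::'n. 0::nat)) x\<bar> \<le> C * Wseq \<omega> lam (\<lambda>i. \<alpha> i + \<beta> i)"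
    using H l unfolding W_norm_finite_def by blast
  define i0 :: 'n where "i0 = undefined"
  have HH: "c0 * u ^ n * exp (- u\<^sup>2 / 2) \<le> C * exp ((1 / lam) * phi_star \<omega> (lam * real n))" if u: "u > 1" for u n
  proof -
    define \<alpha> :: "'n \<Rightarrow> nat" where "\<alpha> = (\<lambda>j. if j = i0 then n else 0)"
    have mp: "mpow (axis i0 u) \<alpha> = u ^ n"
    proof -
      have "(\<Prod>j\<in>UNIV-{i0}. axis i0 u $ j ^ \<alpha> j) = 1"
        by (rule prod.neutral) (auto simp: \<alpha>_def)
      then show ?thesis using mpow_split[of "axis i0 u" \<alpha> i0] by (simp add: \<alpha>_def)
    qed
    have ml: "mlen \<alpha> = n" unfolding mlen_def \<alpha>_def by simp
    have nm: "norm (axis i0 u) = u" using u by (subst axis_scale) simp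
    have "\<bar>mpow (axis i0 u) \<alpha> * mpartial (\<lambda>_. 0) (hermite_fun (\<lambda>_::'n. 0::nat)) (axis i0 u)\<bar> \<le> C * Wseq \<omega> lam (\<lambda>i. \<alpha> i + 0)"
      using C[of "axis i0 u" \<alpha> "\<lambda>_. 0"] by simp
    then have "\<bar>u ^ n * (c0 * exp (- u\<^sup>2 / 2))\<bar> \<le> C * Wseq \<omega> lam \<alpha>"
      by (simp add: mp mpartial_zero hermite_zero nm c0_def)
    moreover have "\<bar>u ^ n * (c0 * exp (- u\<^sup>2 / 2))\<bar> = c0 * u ^ n * exp (- u\<^sup>2 / 2)"
      using u c0 by simp
    ultimately show ?thesis by (simp add: Wseq_def ml)
  qed
  define M where "M = ln C - ln c0"
  have "eventually (\<lambda>u. u \<ge> max 2 (\<bar>M\<bar> + 1)) at_top" by (rule eventually_ge_at_top)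
  then show "eventually (\<lambda>u. norm (\<omega> u) \<le> c * norm (u\<^sup>2)) at_top"
  proof eventually_elim
    case (elim u)
    then have u1: "u > 1" "u \<ge> \<bar>M\<bar> + 1" by auto
    have b: "\<omega> u \<le> lam * (u\<^sup>2 / 2 + ln u + ln C - ln c0)"
      by (rule conv_bound[OF w l c0 u1(1)]) (rule HH[OF u1(1)])
    have "ln u \<le> u" using ln_le_minus_one[of u] u1 by simp
    moreover have "u \<le> u\<^sup>2" using u1 by (simp add: power2_eq_square)
    ultimately have "u\<^sup>2 / 2 + ln u + ln C - ln c0 \<le> 4 * u\<^sup>2" using u1 M_def by linarith
    then have "lam * (u\<^sup>2 / 2 + ln u + ln C - ln c0) \<le> lam * (4 * u\<^sup>2)" using l by (intro mult_left_mono) auto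
    then have "\<omega> u \<le> lam * (4 * u\<^sup>2)" using b by linarith
    moreover have "\<omega> u \<ge> 0" using wf_nonneg[OF w] u1 by simp
    ultimately show ?case using lam_def by simp
  qed
qed



theorem corollary6p7:
  fixes \<omega> :: "real \<Rightarrow> real"
  assumes "weight_function \<omega>"
  shows "((\<forall>\<gamma>::'n::finite \<Rightarrow> nat. hermite_fun \<gamma> \<in> S_roumieu \<omega>) \<longleftrightarrow> \<omega> \<in> O[at_top](\<lambda>t. t\<^sup>2))
       \<and> ((\<forall>\<gamma>::'n::finite \<Rightarrow> nat. hermite_fun \<gamma> \<in> S_beurling \<omega>) \<longleftrightarrow> \<omega> \<in> o[at_top](\<lambda>t. t\<^sup>2))"
proof -
  note w = assms
  have bigO: "\<omega> \<in> O[at_top](\<lambda>t. t\<^sup>2)" using w unfolding weight_function_def by blast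
  have roum: "hermite_fun \<gamma> \<in> S_roumieu \<omega>" for \<gamma> :: "'n \<Rightarrow> nat"
  proof -
    obtain L where L: "hermite_fun \<gamma> = pg (1/2) L" using hermite_pg by blast
    obtain c where c: "c > 0" "eventually (\<lambda>t. norm (\<omega> t) \<le> c * norm (t\<^sup>2)) at_top"
      using landau_o.bigE[OF bigO] by blast
    obtain K' where K': "\<forall>t\<ge>0. \<omega> t \<le> c * t\<^sup>2 + K'"
      using bound_eventually[OF w _ c(2)] c(1) by auto
    define Q :: real where "Q = 3 * 2 ^ (Dg L + 2)"
    define lam where "lam = c * Q\<^sup>2 + 1"
    have l: "lam > 0" unfolding lam_def using c(1) by (simp add: add_nonneg_pos)
    have "(c / lam) * Q\<^sup>2 \<le> 1" using l unfolding lam_def by (simp add: field_simps)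
    then have "W_norm_finite \<omega> lam (pg (1/2) L)"
      using forward[OF w K' _ l, of L] c(1) Q_def by simp
    then show ?thesis unfolding S_roumieu_def L using l smooth_pg by blast
  qed
  have beur: "hermite_fun \<gamma> \<in> S_beurling \<omega>" if small: "\<omega> \<in> o[at_top](\<lambda>t. t\<^sup>2)" for \<gamma> :: "'n \<Rightarrow> nat"
  proof -
    obtain L where L: "hermite_fun \<gamma> = pg (1/2) L" using hermite_pg by blast
    define Q :: real where "Q = 3 * 2 ^ (Dg L + 2)"
    have Qpos: "Q > 0" unfolding Q_def by simp
    have "W_norm_finite \<omega> lam (pg (1/2) L)" if l: "lam > 0" for lam
    proof -
      define c where "c = lam / Q\<^sup>2"
      have c0: "c > 0" unfolding c_def using l Qpos by simp
      have ev: "eventually (\<lambda>t. norm (\<omega> t) \<le> c * norm (t\<^sup>2)) at_top"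
        by (rule landau_o.smallD[OF small c0])
      obtain K' where K': "\<forall>t\<ge>0. \<omega> t \<le> c * t\<^sup>2 + K'"
        using bound_eventually[OF w _ ev] c0 by auto
      have "(c / lam) * Q\<^sup>2 \<le> 1" using l Qpos unfolding c_def by (simp add: field_simps)
      then show ?thesis using forward[OF w K' _ l, of L] c0 Q_def by simp
    qed
    then show ?thesis unfolding S_beurling_def L using smooth_pg by blast
  qed
  have conv: "\<omega> \<in> o[at_top](\<lambda>t. t\<^sup>2)" if "\<forall>\<gamma>::'n \<Rightarrow> nat. hermite_fun \<gamma> \<in> S_beurling \<omega>"
  proof (rule converse[OF w])
    show "\<forall>lam>0. W_norm_finite \<omega> lam (hermite_fun (\<lambda>_::'n. 0::nat))"
      using that unfolding S_beurling_def by blast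
  qed
  show ?thesis using roum bigO beur conv by blast
qed

end
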